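(* Let $n\geq1$. For all $m\in\mathbb N$, $\overline{(m,m)}\in\mathrm{span}_{\mathbb C}\{\overline{(1,1)},\overline{(2,2)},\ldots,\overline{(n,n)}\}$.
   Context: $\Lambda_{2,n}=\{\alpha\in\mathbb N^2:1\leq\alpha_1+\alpha_2\leq n\}$, $\lambda_{2,n}=|\Lambda_{2,n}|$, and for $v\in\mathbb N^2$, $\bar v=\big(\binom{v_1}{\alpha_1}\binom{v_2}{\alpha_2}\big)_{\alpha\in\Lambda_{2,n}}\in\mathbb C^{\lambda_{2,n}}$. *)

theory Defs
  imports "HOL-Analysis.Analysis" "HOL-Library.Function_Algebras"
begin

definition Lambda2 :: "nat \<Rightarrow> (nat \<times> nat) set" where
  "Lambda2 n = {\<alpha>. 1 \<le> fst \<alpha> + snd \<alpha> \<and> fst \<alpha> + snd \<alpha> \<le> n}"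

text \<open>The vector vbar in C^{Lambda_{2,n}}, represented as a function on N^2
  that is zero outside Lambda_{2,n}.\<close>
definition vbar :: "nat \<Rightarrow> nat \<times> nat \<Rightarrow> (nat \<times> nat \<Rightarrow> complex)" where
  "vbar n v = (\<lambda>\<alpha>. if \<alpha> \<in> Lambda2 n
      then of_nat ((fst v choose fst \<alpha>) * (snd v choose snd \<alpha>)) else 0)"

definition cscale :: "complex \<Rightarrow> (nat \<times> nat \<Rightarrow> complex) \<Rightarrow> (nat \<times> nat \<Rightarrow> complex)" where
  "cscale c f = (\<lambda>x. c * f x)"

end

theory Submission
  imports Defs "HOL-Computational_Algebra.Polynomial"
begin

definition Bp :: "nat \<Rightarrow> complex poly" where
  "Bp a = smult (1 / fact a) (\<Prod>i<a. [:- of_nat i, 1:])"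

lemma deg_lin_prod: "finite S \<Longrightarrow> degree (\<Prod>i\<in>S. [:- (c i::complex), 1:]) \<le> card S"
proof -
  assume f: "finite S"
  have "degree (\<Prod>i\<in>S. [:- c i, 1:]) \<le> sum (degree \<circ> (\<lambda>i. [:- c i, 1:])) S"
    by (rule degree_prod_sum_le[OF f])
  also have "\<dots> = card S" by simp
  finally show ?thesis .
qed

lemma Bp_deg: "degree (Bp a) \<le> a"
  unfolding Bp_def using deg_lin_prod[of "{..<a}" "\<lambda>i. of_nat i"]
  by (metis card_lessThan degree_smult_le finite_lessThan le_trans)

lemma Bp_poly: "poly (Bp a) (of_nat x) = of_nat (x choose a)"
  unfolding Bp_def binomial_gbinomial
  by (simp add: poly_prod gbinomial_prod_rev atLeast0LessThan)

definition Lp :: "nat \<Rightarrow> nat \<Rightarrow> complex poly" where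
  "Lp n k = smult (\<Prod>j\<in>{0..n}-{k}. 1 / (of_nat k - of_nat j)) (\<Prod>j\<in>{0..n}-{k}. [:- of_nat j, 1:])"

lemma Lp_deg: assumes "k \<le> n" shows "degree (Lp n k) \<le> n"
proof -
  have "degree (Lp n k) \<le> degree (\<Prod>j\<in>{0..n}-{k}. [:- (of_nat j::complex), 1:])"
    unfolding Lp_def by (rule degree_smult_le)
  also have "\<dots> \<le> card ({0..n}-{k})" by (rule deg_lin_prod) simp
  also have "\<dots> \<le> n" using assms by (auto simp: card_Diff_singleton)
  finally show ?thesis .
qed

lemma Lp_poly: assumes "i \<le> n" "k \<le> n"
  shows "poly (Lp n k) (of_nat i) = (if i = k then 1 else 0)"
proof (cases "i = k")
  case True
  have "poly (Lp n k) (of_nat i) = (\<Prod>j\<in>{0..n}-{k}. 1 / (of_nat k - of_nat j) * (of_nat k - of_nat j :: complex))"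
    unfolding Lp_def using True by (simp add: poly_prod prod.distrib[symmetric])
  also have "\<dots> = 1" by (intro prod.neutral) auto
  finally show ?thesis using True by simp
next
  case False
  then show ?thesis unfolding Lp_def using assms
    by (auto simp: poly_prod prod_zero_iff intro!: bexI[of _ i])
qed

lemma interp:
  fixes p :: "complex poly"
  assumes "degree p \<le> n"
  shows "poly p z = (\<Sum>k\<le>n. poly p (of_nat k) * poly (Lp n k) z)"
proof -
  define q where "q = (\<Sum>k\<le>n. smult (poly p (of_nat k)) (Lp n k))"
  have dq: "degree q \<le> n" unfolding q_def
    by (intro degree_sum_le) (auto intro!: le_trans[OF degree_smult_le] Lp_deg)
  have "p = q"
  proof (rule poly_eqI_degree[where A = "of_nat ` {0..n}"])
    fix x assume "x \<in> (of_nat ` {0..n} :: complex set)"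
    then obtain i where i: "i \<le> n" "x = of_nat i" by auto
    have "poly q x = (\<Sum>k\<le>n. if k = i then poly p (of_nat k) else 0)"
      unfolding q_def poly_sum using i by (intro sum.cong) (auto simp: Lp_poly)
    also have "\<dots> = poly p x" using i by (simp add: sum.delta')
    finally show "poly p x = poly q x" by simp
  next
    have "card (of_nat ` {0..n} :: complex set) = n + 1"
      by (subst card_image) (auto simp: inj_on_def)
    then show "degree p < card (of_nat ` {0..n} :: complex set)"
      "degree q < card (of_nat ` {0..n} :: complex set)" using assms dq by auto
  qed
  then have "poly p z = poly q z" by simp
  then show ?thesis unfolding q_def poly_sum by simp
qed

lemma fsum_apply: "(sum f S) x = (\<Sum>i\<in>S. f i x)"
  for f :: "nat \<Rightarrow> nat \<times> nat \<Rightarrow> complex"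
  by (induct S rule: infinite_finite_induct) auto

lemma cscale_module: "module cscale"
  by unfold_locales (auto simp: cscale_def fun_eq_iff algebra_simps)

lemma coord_interp:
  assumes "1 \<le> a + b" "a + b \<le> n"
  shows "(of_nat ((m choose a) * (m choose b)) :: complex) =
    (\<Sum>k\<in>{1..n}. poly (Lp n k) (of_nat m) * of_nat ((k choose a) * (k choose b)))"
proof -
  define P where "P = Bp a * Bp b"
  have ev: "poly P (of_nat x) = of_nat ((x choose a) * (x choose b))" for x
    unfolding P_def by (simp add: Bp_poly)
  have "degree P \<le> a + b" unfolding P_def
    using degree_mult_le[of "Bp a" "Bp b"] Bp_deg[of a] Bp_deg[of b] by linarith
  then have "degree P \<le> n" using assms by linarith
  from interp[OF this, of "of_nat m"]
  have "of_nat ((m choose a) * (m choose b)) =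
    (\<Sum>k\<le>n. of_nat ((k choose a) * (k choose b)) * poly (Lp n k) (of_nat m))"
    by (simp add: ev)
  also have "{..n} = insert 0 {1..n}" by auto
  also have "(\<Sum>k\<in>insert 0 {1..n}. of_nat ((k choose a) * (k choose b)) * poly (Lp n k) (of_nat m))
     = (\<Sum>k\<in>{1..n}. of_nat ((k choose a) * (k choose b)) * poly (Lp n k) (of_nat m))"
    using assms by (subst sum.insert) auto
  finally show ?thesis by (simp add: mult.commute)
qed

theorem lemma2p11:
  fixes n :: nat
  assumes "n \<ge> 1"
  shows "\<forall>m::nat. vbar n (m, m) \<in> module.span cscale ((\<lambda>k. vbar n (k, k)) ` {1..n})"
proof
  fix m :: nat
  interpret M: module cscale by (rule cscale_module)
  have eq: "vbar n (m, m) = (\<Sum>k\<in>{1..n}. cscale (poly (Lp n k) (of_nat m)) (vbar n (k, k)))"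
  proof
    fix \<alpha> :: "nat \<times> nat"
    obtain a b where ab: "\<alpha> = (a, b)" by (cases \<alpha>)
    show "vbar n (m, m) \<alpha> = (\<Sum>k\<in>{1..n}. cscale (poly (Lp n k) (of_nat m)) (vbar n (k, k))) \<alpha>"
      unfolding fsum_apply cscale_def vbar_def ab Lambda2_def
      using coord_interp[of a b n m] by auto
  qed
  show "vbar n (m, m) \<in> M.span ((\<lambda>k. vbar n (k, k)) ` {1..n})"
    unfolding eq by (intro M.span_sum M.span_scale M.span_base) auto
qed

end
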